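(* If $0\le\Delta<1$ and $0<\gamma<\frac{2(1+\Delta)}{\zeta\sigma_{\max}^2}$, then $\lambda_{2,\max}<1$.
   Context: $\sigma_1^2\ge\dots\ge\sigma_n^2\ge0$ are the eigenvalues of $\boldsymbol A\boldsymbol A^T$ for $\boldsymbol A\in\mathbb R^{n\times d}$, $\sigma_{\max}^2$ the largest; $\zeta\in(0,1]$. For $j\in[n]$: $\Omega_j=1-\gamma\zeta\sigma_j^2+\Delta$ and $\lambda_{2,j}=\frac{-2\Delta+\Omega_j^2+\sqrt{\Omega_j^2(\Omega_j^2-4\Delta)}}{2}$ (complex square root if the argument is negative). $\lambda_{2,\max}=\max\{|\lambda_{2,j}|:\sigma_j^2>0\}$. *)

theory Defs
  imports "HOL-Analysis.Analysis"
begin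

definition is_eigenvalue :: "real^'n^'n \<Rightarrow> real \<Rightarrow> bool" where
  "is_eigenvalue M s \<longleftrightarrow> (\<exists>v. v \<noteq> 0 \<and> M *v v = s *\<^sub>R v)"

definition sigma_max_sq :: "real^'d^'n \<Rightarrow> real" where
  "sigma_max_sq A = Max {s. is_eigenvalue (A ** transpose A) s}"

definition Omega :: "real \<Rightarrow> real \<Rightarrow> real \<Rightarrow> real \<Rightarrow> real" where
  "Omega \<gamma> \<zeta> \<Delta> s = 1 - \<gamma> * \<zeta> * s + \<Delta>"

text \<open>lambda_{2,j} as a function of the eigenvalue s = sigma_j^2 (complex square root).\<close>
definition lambda2 :: "real \<Rightarrow> real \<Rightarrow> real \<Rightarrow> real \<Rightarrow> complex" where
  "lambda2 \<gamma> \<zeta> \<Delta> s =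
     (let \<Omega> = Omega \<gamma> \<zeta> \<Delta> s in
      (complex_of_real (-2 * \<Delta> + \<Omega>^2) + csqrt (complex_of_real (\<Omega>^2 * (\<Omega>^2 - 4 * \<Delta>)))) / 2)"

definition lambda2_max :: "real^'d^'n \<Rightarrow> real \<Rightarrow> real \<Rightarrow> real \<Rightarrow> real" where
  "lambda2_max A \<gamma> \<zeta> \<Delta> =
     Max ((\<lambda>s. cmod (lambda2 \<gamma> \<zeta> \<Delta> s)) ` {s. is_eigenvalue (A ** transpose A) s \<and> s > 0})"

end

theory Submission
  imports Defs
begin

lemma lin_aux:
  fixes p q w2 tt t D :: real
  assumes "p \<le> q" "w2 = tt" "q = 2 * t - tt" "0 \<le> p" "0 \<le> D" "D < 1" "t < 1 + D" "0 \<le> w2 - 4 * D"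
  shows "0 \<le> (-2 * D + w2 + p) / 2 \<and> (-2 * D + w2 + p) / 2 < 1"
proof
  show "0 \<le> (-2 * D + w2 + p) / 2" using assms by simp
  have "-2 * D + w2 + p < 2" using assms by linarith
  then show "(-2 * D + w2 + p) / 2 < 1" by simp
qed

lemma scalar_bound:
  fixes W D :: real
  assumes "0 \<le> D" "D < 1" "\<bar>W\<bar> < 1 + D"
  shows "cmod ((complex_of_real (-2 * D + W^2) + csqrt (complex_of_real (W^2 * (W^2 - 4 * D)))) / 2) < 1"
proof (cases "W^2 * (W^2 - 4 * D) \<ge> 0")
  case True
  have cs: "csqrt (complex_of_real (W^2 * (W^2 - 4 * D))) = complex_of_real (sqrt (W^2 * (W^2 - 4 * D)))"
    using True by (simp add: csqrt_of_real)
  define v where "v = (-2 * D + W^2 + sqrt (W^2 * (W^2 - 4 * D))) / 2"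
  have eq: "(complex_of_real (-2 * D + W^2) + csqrt (complex_of_real (W^2 * (W^2 - 4 * D)))) / 2 = complex_of_real v"
    unfolding cs v_def by simp
  have "\<bar>v\<bar> < 1"
  proof (cases "W = 0")
    case True then show ?thesis using assms by (simp add: v_def)
  next
    case False
    then have "W^2 > 0" by simp
    with True have h4: "W^2 - 4*D \<ge> 0" by (simp add: zero_le_mult_iff)
    have sq: "sqrt (W^2 * (W^2 - 4 * D)) = \<bar>W\<bar> * sqrt (W^2 - 4*D)"
      by (simp add: real_sqrt_mult)
    have t2: "2 - \<bar>W\<bar> > 0" using assms by linarith
    have "W^2 - 4*D \<le> (2 - \<bar>W\<bar>)^2" using assms by (simp add: power2_eq_square algebra_simps) 
    then have r: "sqrt (W^2 - 4*D) \<le> 2 - \<bar>W\<bar>"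
      using t2 real_sqrt_le_mono by fastforce
    have "\<bar>W\<bar> * sqrt (W^2 - 4*D) \<le> \<bar>W\<bar> * (2 - \<bar>W\<bar>)"
      using r by (simp add: mult_left_mono)
    moreover have "W^2 = \<bar>W\<bar> * \<bar>W\<bar>" by (simp add: power2_eq_square)
    moreover have "\<bar>W\<bar> * (2 - \<bar>W\<bar>) = 2 * \<bar>W\<bar> - \<bar>W\<bar> * \<bar>W\<bar>" by (simp add: algebra_simps)
    moreover have "0 \<le> \<bar>W\<bar> * sqrt (W^2 - 4*D)" using h4 by simp
    ultimately have f: "0 \<le> v \<and> v < 1" using assms h4 unfolding v_def sq by (rule lin_aux)
    then show ?thesis by linarith
  qed
  then show ?thesis unfolding eq by simp
next
  case False
  have cs: "csqrt (complex_of_real (W^2 * (W^2 - 4 * D))) = \<i> * complex_of_real (sqrt (W^2 * (4 * D - W^2)))"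
    using False by (simp add: csqrt_of_real' algebra_simps)
  define a where "a = -2 * D + W^2"
  define b where "b = sqrt (W^2 * (4 * D - W^2))"
  have bb: "b^2 = W^2 * (4 * D - W^2)" unfolding b_def using False
    by (simp add: mult_nonneg_nonneg algebra_simps)
  have eq: "(complex_of_real (-2 * D + W^2) + csqrt (complex_of_real (W^2 * (W^2 - 4 * D)))) / 2 = Complex (a/2) (b/2)"
    unfolding cs a_def b_def by (simp add: complex_eq_iff)
  have "(a/2)^2 + (b/2)^2 = D^2" unfolding power_divide bb a_def by (simp add: power2_eq_square field_simps)
  then have "cmod (Complex (a/2) (b/2)) = D" using assms by (simp add: cmod_def)
  then show ?thesis unfolding eq using assms by simp
qed


lemma inner_AAt:
  fixes A :: "real^'d^'n"
  shows "x \<bullet> ((A ** transpose A) *v y) = (transpose A *v x) \<bullet> (transpose A *v y)"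
proof -
  have "x \<bullet> ((A ** transpose A) *v y) = x \<bullet> (A *v (transpose A *v y))"
    by (simp only: matrix_vector_mul_assoc)
  also have "\<dots> = (x v* A) \<bullet> (transpose A *v y)"
    by (simp add: dot_lmul_matrix)
  also have "x v* A = transpose A *v x"
    by (metis transpose_transpose vector_transpose_matrix)
  finally show ?thesis .
qed

lemma sym_AAt:
  fixes A :: "real^'d^'n"
  shows "x \<bullet> ((A ** transpose A) *v y) = ((A ** transpose A) *v x) \<bullet> y"
  by (metis inner_AAt inner_commute)

lemma finite_eig:
  fixes A :: "real^'d^'n"
  shows "finite {s. is_eigenvalue (A ** transpose A) s}"
proof -
  define M where "M = A ** transpose A"
  define S where "S = {s. is_eigenvalue M s}"
  define f where "f s = (SOME v. v \<noteq> 0 \<and> M *v v = s *\<^sub>R v)" for s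
  have fS: "f s \<noteq> 0 \<and> M *v f s = s *\<^sub>R f s" if "s \<in> S" for s
  proof -
    from that obtain v where "v \<noteq> 0 \<and> M *v v = s *\<^sub>R v" unfolding S_def is_eigenvalue_def by blast
    then show ?thesis unfolding f_def by (rule someI)
  qed
  have orth: "f s \<bullet> f t = 0" if "s \<in> S" "t \<in> S" "s \<noteq> t" for s t
  proof -
    have "s * (f s \<bullet> f t) = (M *v f s) \<bullet> f t" using fS[OF that(1)] by simp
    also have "\<dots> = f s \<bullet> (M *v f t)" unfolding M_def by (rule sym_AAt[symmetric])
    also have "\<dots> = t * (f s \<bullet> f t)" using fS[OF that(2)] by simp
    finally show ?thesis using that(3) by simp
  qed
  have inj: "inj_on f S"
  proof (rule inj_onI)
    fix s t assume st: "s \<in> S" "t \<in> S" "f s = f t"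
    then have "s *\<^sub>R f s = t *\<^sub>R f s" using fS by metis
    then show "s = t" using fS[OF st(1)] by simp
  qed
  have "pairwise orthogonal (f ` S)"
    unfolding pairwise_def orthogonal_def using orth by auto
  moreover have "0 \<notin> f ` S" using fS by auto
  ultimately have "independent (f ` S)" by (rule pairwise_orthogonal_independent)
  then have "finite (f ` S)" by (rule finiteI_independent)
  then have "finite S" using inj finite_imageD by blast
  then show ?thesis unfolding S_def M_def .
qed

lemma exists_eig:
  fixes A :: "real^'d^'n"
  shows "\<exists>s. is_eigenvalue (A ** transpose A) s"
proof -
  define M where "M = A ** transpose A"
  define q where "q x = x \<bullet> (M *v x)" for x :: "real^'n"
  have sym: "x \<bullet> (M *v y) = (M *v x) \<bullet> y" for x y unfolding M_def by (rule sym_AAt)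
  have cont: "continuous_on (sphere 0 1) q"
    unfolding q_def by (intro continuous_intros linear_continuous_on matrix_vector_mul_bounded_linear)
  have ne: "sphere (0::real^'n) 1 \<noteq> {}"
  proof -
    obtain i :: 'n where True by simp
    have "axis i (1::real) \<in> sphere 0 1" by (simp add: norm_axis_1)
    then show ?thesis by blast
  qed
  obtain v where v: "v \<in> sphere 0 1" and vmax: "\<And>y. y \<in> sphere 0 1 \<Longrightarrow> q y \<le> q v"
    using continuous_attains_sup[OF compact_sphere ne cont] by blast
  define l where "l = q v"
  have qs: "q (c *\<^sub>R x) = c^2 * q x" for c x
    unfolding q_def by (simp add: matrix_vector_mult_scaleR power2_eq_square)
  have bound: "q x \<le> l * (x \<bullet> x)" for x
  proof (cases "x = 0")
    case True then show ?thesis by (simp add: q_def)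
  next
    case False
    define y where "y = (1 / norm x) *\<^sub>R x"
    have "y \<in> sphere 0 1" using False by (simp add: y_def)
    then have "q y \<le> l" using vmax l_def by simp
    moreover have "q y = q x / (norm x)^2" unfolding y_def qs by (simp add: power_divide)
    moreover have "(norm x)^2 = x \<bullet> x" by (simp add: power2_norm_eq_inner)
    moreover have "norm x > 0" using False by simp
    ultimately show ?thesis by (simp add: divide_le_eq mult.commute)
  qed
  define p where "p x = l * (x \<bullet> x) - q x" for x
  have pnn: "p x \<ge> 0" for x using bound[of x] by (simp add: p_def)
  have vv: "v \<bullet> v = 1" proof -
    have "norm v = 1" using v by simp
    then show ?thesis by (metis power2_norm_eq_inner power_one)
  qed
  define w where "w = l *\<^sub>R v - M *v v"
  have pv: "p v = 0" by (simp add: p_def l_def vv)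
  have expand: "p (v - t *\<^sub>R w) = p v - 2 * t * (w \<bullet> w) + t^2 * p w" for t
  proof -
    have e1: "(v - t *\<^sub>R w) \<bullet> (v - t *\<^sub>R w) = v \<bullet> v - 2 * t * (v \<bullet> w) + t^2 * (w \<bullet> w)"
      by (simp add: inner_diff_left inner_diff_right inner_commute[of w v] power2_eq_square algebra_simps)
    have e2: "q (v - t *\<^sub>R w) = q v - t * (v \<bullet> (M *v w)) - t * (w \<bullet> (M *v v)) + t^2 * q w"
      unfolding q_def
      by (simp add: matrix_vector_mult_diff_distrib matrix_vector_mult_scaleR inner_diff_left inner_diff_right power2_eq_square algebra_simps)
    have e3: "v \<bullet> (M *v w) = w \<bullet> (M *v v)" using sym[of v w] by (simp add: inner_commute)
    have "w \<bullet> w = w \<bullet> (l *\<^sub>R v - M *v v)" by (subst (2) w_def) (rule refl)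
    also have "\<dots> = l * (v \<bullet> w) - w \<bullet> (M *v v)" by (simp add: inner_diff_right inner_commute)
    finally have e4: "w \<bullet> w = l * (v \<bullet> w) - w \<bullet> (M *v v)" .
    have "p (v - t *\<^sub>R w) = l * (v \<bullet> v - 2 * t * (v \<bullet> w) + t^2 * (w \<bullet> w)) - (q v - 2 * t * (w \<bullet> (M *v v)) + t^2 * q w)"
      unfolding p_def e1 e2 e3 by simp
    also have "\<dots> = (l * (v \<bullet> v) - q v) - 2 * t * (l * (v \<bullet> w) - w \<bullet> (M *v v)) + t^2 * (l * (w \<bullet> w) - q w)"
      by (simp add: algebra_simps)
    also have "\<dots> = p v - 2 * t * (w \<bullet> w) + t^2 * p w" unfolding p_def e4 ..
    finally show ?thesis .
  qed
  have "w = 0"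
  proof (rule ccontr)
    assume "w \<noteq> 0"
    then have a: "w \<bullet> w > 0" by simp
    define c where "c = p w"
    have c0: "c \<ge> 0" using pnn c_def by simp
    define t where "t = (w \<bullet> w) / (c + 1)"
    have "p (v - t *\<^sub>R w) = - 2 * t * (w \<bullet> w) + t^2 * c" using expand pv c_def by simp
    also have "\<dots> < 0"
    proof -
      have t0: "t > 0" using a c0 by (simp add: t_def)
      have "t * c < 2 * (w \<bullet> w)"
      proof -
        have "t * c = (w \<bullet> w) * (c / (c + 1))" by (simp add: t_def)
        also have "\<dots> < (w \<bullet> w) * 2" using a c0 by (intro mult_strict_left_mono) (simp_all add: divide_less_eq)
        finally show ?thesis by simp
      qed
      then have "t * (t * c) < t * (2 * (w \<bullet> w))" using t0 by (rule mult_strict_left_mono)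
      then show ?thesis by (simp add: power2_eq_square algebra_simps)
    qed
    finally show False using pnn by (meson not_le)
  qed
  then have "M *v v = l *\<^sub>R v" by (simp add: w_def)
  moreover have "v \<noteq> 0" using v by auto
  ultimately show ?thesis unfolding is_eigenvalue_def M_def by blast
qed

theorem proposition13:
  fixes A :: "real^'d^'n" and \<gamma> \<zeta> \<Delta> :: real
  assumes "0 < \<zeta>" and "\<zeta> \<le> 1"
    and "0 \<le> \<Delta>" and "\<Delta> < 1"
    and "0 < \<gamma>" and "\<gamma> < 2 * (1 + \<Delta>) / (\<zeta> * sigma_max_sq A)"
  shows "lambda2_max A \<gamma> \<zeta> \<Delta> < 1"
proof -
  define S where "S = {s. is_eigenvalue (A ** transpose A) s}"
  have fin: "finite S" unfolding S_def by (rule finite_eig)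
  have ne: "S \<noteq> {}" unfolding S_def using exists_eig[of A] by blast
  define m where "m = sigma_max_sq A"
  have mS: "m \<in> S" unfolding m_def sigma_max_sq_def S_def[symmetric] using fin ne by (rule Max_in)
  have mge: "s \<le> m" if "s \<in> S" for s unfolding m_def sigma_max_sq_def S_def[symmetric] using fin that by (rule Max_ge)
  have zm: "\<zeta> * m > 0"
  proof (rule ccontr)
    assume "\<not> \<zeta> * m > 0"
    then have "2 * (1 + \<Delta>) / (\<zeta> * m) \<le> 0" using assms(3)
      by (simp add: divide_nonneg_nonpos)
    then show False using assms(5,6) m_def by simp
  qed
  have gzm: "\<gamma> * (\<zeta> * m) < 2 * (1 + \<Delta>)" using assms(6) zm m_def by (simp add: less_divide_eq)
  define P where "P = {s \<in> S. s > 0}"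
  have Pfin: "finite P" using fin by (simp add: P_def)
  have mpos: "m > 0" using zm assms(1) by (simp add: zero_less_mult_iff)
  have Pne: "P \<noteq> {}" using mS mpos P_def by blast
  define g where "g s = cmod (lambda2 \<gamma> \<zeta> \<Delta> s)" for s
  have eqP: "{s. is_eigenvalue (A ** transpose A) s \<and> s > 0} = P" by (simp add: P_def S_def)
  have "lambda2_max A \<gamma> \<zeta> \<Delta> = Max (g ` P)" unfolding lambda2_max_def eqP g_def ..
  also have "\<dots> \<in> g ` P" using Pfin Pne by (intro Max_in) auto
  finally obtain s where sP: "s \<in> P" and ls: "lambda2_max A \<gamma> \<zeta> \<Delta> = g s" by blast
  have s0: "s > 0" and sm: "s \<le> m" using sP mge by (auto simp: P_def)
  have "\<gamma> * \<zeta> * s \<le> \<gamma> * \<zeta> * m" using sm assms(1,5) by simp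
  moreover have "\<gamma> * \<zeta> * s > 0" using s0 assms(1,5) by simp
  ultimately have "\<bar>Omega \<gamma> \<zeta> \<Delta> s\<bar> < 1 + \<Delta>" using gzm unfolding Omega_def
    by (simp add: mult.assoc abs_less_iff)
  then have "g s < 1" unfolding g_def lambda2_def Let_def using assms(3,4) by (rule scalar_bound[rotated 2]) 
  then show ?thesis using ls by simp
qed

end
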